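(* Let $q>1$ and let $(M,\le)$ be a finite ordered monoid such that $M$ is a $T_q$ monoid. Then $N^1(M)=\Omega(n)$.
   Context: $M$ is a $T_q$ monoid if there exist idempotents $e,f\in M$ (i.e. $ee=e$, $ff=f$) such that $(ef)^qe=e$ and $(ef)^re\ne e$ for every positive integer $r$ not divisible by $q$. A finite ordered monoid is a finite monoid with a partial order such that $x\le y\Rightarrow zx\le zy$ and $xz\le yz$. Non-deterministic communication complexity: for $f:X\times Y\to\{0,1\}$, $N^1(f)$ is the minimum cost of a non-deterministic protocol for $f$; equivalently, up to an additive constant 2, $N^1(f)=\log_2 C^1(f)$, where $C^1(f)$ is the minimum number of rectangles $S\times T$ on which $f\equiv1$ whose union is $f^{-1}(1)$. An order ideal is a subset $I\subseteq M$ with $y\in I, x\le y\Rightarrow x\in I$. For an order ideal $I$, $N^1(M,I)(n)$ is $N^1$ of the function where Alice receives $m_1,m_3,\dots,m_{2n-1}\in M$, Bob receives $m_2,\dots,m_{2n}\in M$, with value $1$ iff $m_1\cdots m_{2n}\in I$; $N^1(M)(n)=\max_I N^1(M,I)(n)$. Asymptotics are as $n\to\infty$. *)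

theory Defs
  imports Complex_Main "HOL-Library.Landau_Symbols"
begin

definition ordered_monoid :: "('a::monoid_mult \<Rightarrow> 'a \<Rightarrow> bool) \<Rightarrow> bool" where
  "ordered_monoid le \<longleftrightarrow>
     (\<forall>x. le x x) \<and> (\<forall>x y. le x y \<longrightarrow> le y x \<longrightarrow> x = y) \<and>
     (\<forall>x y z. le x y \<longrightarrow> le y z \<longrightarrow> le x z) \<and>
     (\<forall>x y z. le x y \<longrightarrow> le (z * x) (z * y) \<and> le (x * z) (y * z))"

definition Tq_monoid :: "nat \<Rightarrow> 'a::monoid_mult itself \<Rightarrow> bool" where
  "Tq_monoid q _ \<longleftrightarrow> (\<exists>e f :: 'a. e * e = e \<and> f * f = f \<and> (e * f) ^ q * e = e \<and>
       (\<forall>r::nat. 0 < r \<longrightarrow> \<not> q dvd r \<longrightarrow> (e * f) ^ r * e \<noteq> e))"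

definition order_ideal :: "('a \<Rightarrow> 'a \<Rightarrow> bool) \<Rightarrow> 'a set \<Rightarrow> bool" where
  "order_ideal le I \<longleftrightarrow> (\<forall>x y. y \<in> I \<longrightarrow> le x y \<longrightarrow> x \<in> I)"

definition cover_number :: "('x \<Rightarrow> 'y \<Rightarrow> bool) \<Rightarrow> 'x set \<Rightarrow> 'y set \<Rightarrow> nat" where
  "cover_number f X Y = (LEAST k. \<exists>R :: ('x set \<times> 'y set) set.
      finite R \<and> card R = k \<and>
      (\<forall>(S, T) \<in> R. S \<subseteq> X \<and> T \<subseteq> Y \<and> (\<forall>x\<in>S. \<forall>y\<in>T. f x y)) \<and>
      (\<Union>(S, T) \<in> R. S \<times> T) = {(x, y). x \<in> X \<and> y \<in> Y \<and> f x y})"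

text \<open>Non-deterministic complexity, taken as log2 of the cover number.\<close>
definition N1 :: "('x \<Rightarrow> 'y \<Rightarrow> bool) \<Rightarrow> 'x set \<Rightarrow> 'y set \<Rightarrow> real" where
  "N1 f X Y = log 2 (real (cover_number f X Y))"

text \<open>Alice holds xs = [m1, m3, ..., m_{2n-1}], Bob holds ys = [m2, ..., m_{2n}];
  the product m1 m2 ... m_{2n} is prod_list (map2 (*) xs ys).\<close>
definition word_problem :: "'a::monoid_mult set \<Rightarrow> 'a list \<Rightarrow> 'a list \<Rightarrow> bool" where
  "word_problem I xs ys \<longleftrightarrow> prod_list (map2 (*) xs ys) \<in> I"

definition N1_ideal :: "'a::monoid_mult set \<Rightarrow> nat \<Rightarrow> real" where
  "N1_ideal I n = N1 (word_problem I) {xs. length xs = n} {ys. length ys = n}"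

definition N1_monoid :: "('a::{monoid_mult,finite} \<Rightarrow> 'a \<Rightarrow> bool) \<Rightarrow> nat \<Rightarrow> real" where
  "N1_monoid le n = Max {N1_ideal I n | I. order_ideal le I}"

end

theory Submission
  imports Defs
begin


definition chi :: "nat \<Rightarrow> nat \<Rightarrow> complex" where
  "chi q k = cis (2 * pi * real k / real q)"

lemma cis_2pi_int: "cis (2 * pi * of_int k) = 1"
proof -
  have h: "cis (of_int k * (2*pi)) = 1" using cis_power_int[of "2*pi" k] by simp
  then show ?thesis by (metis mult.commute)
qed

lemma chi_add: "chi q (a + b) = chi q a * chi q b"
  unfolding chi_def by (simp add: cis_mult add_divide_distrib distrib_left)

lemma chi_mult_q: "q > 0 \<Longrightarrow> chi q (q * t) = 1"
  unfolding chi_def using cis_2pi_int[of "int t"] by (simp add: mult.assoc)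

lemma chi_mod: assumes "q > 0" shows "chi q k = chi q (k mod q)"
proof -
  have "chi q k = chi q (k mod q + q * (k div q))" by simp
  also have "\<dots> = chi q (k mod q)" using assms by (simp only: chi_add chi_mult_q) simp
  finally show ?thesis .
qed

lemma norm_chi [simp]: "norm (chi q k) = 1" unfolding chi_def by simp

lemma chi_single:
  assumes q: "q > 0" and y: "y < q" and y': "y' < q"
  shows "(\<Sum>x<q. chi q (x*y) * cnj (chi q (x*y'))) = (if y = y' then of_nat q else 0)"
proof -
  define z where "z = cis (2 * pi * (real y - real y') / real q)"
  have zt: "chi q (x*y) * cnj (chi q (x*y')) = z ^ x" for x
    unfolding chi_def z_def by (simp add: cis_cnj cis_mult DeMoivre algebra_simps diff_divide_distrib add_divide_distrib)
  show ?thesis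
  proof (cases "y = y'")
    case True
    have "(\<Sum>x<q. chi q (x*y) * cnj (chi q (x*y'))) = (\<Sum>x<q. z ^ x)" by (simp add: zt)
    also have "\<dots> = of_nat q" using True by (simp add: z_def)
    finally show ?thesis using True by simp
  next
    case False
    have zq: "z ^ q = 1"
    proof -
      have e: "real q * (2 * pi * (real y - real y') / real q) = 2 * pi * of_int (int y - int y')"
        using q by simp
      have "z ^ q = cis (2 * pi * of_int (int y - int y'))"
        unfolding z_def DeMoivre e ..
      then show ?thesis by (simp add: cis_2pi_int)
    qed
    have z1: "z \<noteq> 1"
    proof
      assume "z = 1"
      then have "cos (2 * pi * (real y - real y') / real q) = 1"
        unfolding z_def by (metis Re_complex_of_real cis.sel(1) complex_Re_of_int of_int_1)
      then obtain k :: int where k: "2 * pi * (real y - real y') / real q = real_of_int k * 2 * pi"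
        using cos_one_2pi_int by blast
      then have "2*pi*(real y - real y') = 2*pi*(real_of_int k * real q)" using q by (simp add: field_simps)
      then have "real y - real y' = real_of_int k * real q" using pi_gt_zero by simp
      then have ki: "int y - int y' = k * int q"
        by (metis of_int_eq_iff of_int_mult of_int_of_nat_eq of_int_diff)
      show False
      proof (cases "k = 0")
        case True then show False using ki False by simp
      next
        case False
        then have "\<bar>k * int q\<bar> \<ge> int q" using False by (simp add: abs_mult mult_le_cancel_right1) linarith
        moreover have "\<bar>int y - int y'\<bar> < int q" using y y' by simp
        ultimately show False using ki by simp
      qed
    qed
    have "(\<Sum>x<q. chi q (x*y) * cnj (chi q (x*y'))) = (\<Sum>x<q. z ^ x)" by (simp add: zt)
    also have "\<dots> = 0" using geometric_sum[OF z1, of q] zq by simp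
    finally show ?thesis using False by simp
  qed
qed



definition vecs :: "nat \<Rightarrow> nat \<Rightarrow> nat list set" where
  "vecs q m = {xs. set xs \<subseteq> {..<q} \<and> length xs = m}"

definition dot :: "nat list \<Rightarrow> nat list \<Rightarrow> nat" where
  "dot a b = sum_list (map2 (*) a b)"

lemma dot_Cons [simp]: "dot (x#xs) (y#ys) = x*y + dot xs ys"
  by (simp add: dot_def)

lemma dot_Nil [simp]: "dot [] ys = 0" by (simp add: dot_def)

lemma vecs_0: "vecs q 0 = {[]}" by (auto simp: vecs_def)

lemma vecs_Suc: "vecs q (Suc m) = (\<lambda>(x,xs). x#xs) ` ({..<q} \<times> vecs q m)"
  by (auto simp: vecs_def length_Suc_conv)

lemma finite_vecs [simp]: "finite (vecs q m)"
  unfolding vecs_def by (rule finite_lists_length_eq) simp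

lemma card_vecs: "card (vecs q m) = q ^ m"
  unfolding vecs_def using card_lists_length_eq[of "{..<q}" m] by simp

lemma inj_Cons_pair: "inj_on (\<lambda>(x,xs). x#xs) A"
  by (auto simp: inj_on_def)

lemma orth:
  assumes q: "q > 0"
  shows "t \<in> vecs q m \<Longrightarrow> t' \<in> vecs q m \<Longrightarrow>
    (\<Sum>s\<in>vecs q m. chi q (dot s t) * cnj (chi q (dot s t'))) = (if t = t' then of_nat (q^m) else 0)"
proof (induction m arbitrary: t t')
  case 0
  then show ?case by (simp add: vecs_0 chi_def)
next
  case (Suc m)
  from Suc.prems obtain y ys where t: "t = y#ys" and y: "y < q" and ys: "ys \<in> vecs q m"
    by (cases t) (auto simp: vecs_def)
  from Suc.prems obtain y' ys' where t': "t' = y'#ys'" and y': "y' < q" and ys': "ys' \<in> vecs q m"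
    by (cases t') (auto simp: vecs_def)
  have "(\<Sum>s\<in>vecs q (Suc m). chi q (dot s t) * cnj (chi q (dot s t')))
      = (\<Sum>p\<in>{..<q} \<times> vecs q m. chi q (dot (fst p # snd p) t) * cnj (chi q (dot (fst p # snd p) t')))"
    unfolding vecs_Suc by (subst sum.reindex[OF inj_Cons_pair]) (simp add: case_prod_beta)
  also have "\<dots> = (\<Sum>x<q. \<Sum>xs\<in>vecs q m. (chi q (x*y) * cnj (chi q (x*y'))) *
                     (chi q (dot xs ys) * cnj (chi q (dot xs ys'))))"
    unfolding sum.cartesian_product t t'
  proof (intro sum.cong refl)
    fix p assume "p \<in> {..<q} \<times> vecs q m"
    obtain x xs where p: "p = (x, xs)" by (cases p)
    show "chi q (dot (fst p # snd p) (y # ys)) * cnj (chi q (dot (fst p # snd p) (y' # ys'))) =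
      (case p of (x, xs) \<Rightarrow> chi q (x * y) * cnj (chi q (x * y')) * (chi q (dot xs ys) * cnj (chi q (dot xs ys'))))"
      unfolding p by (simp only: fst_conv snd_conv prod.case dot_Cons chi_add complex_cnj_mult mult_ac)
  qed
  also have "\<dots> = (\<Sum>x<q. chi q (x*y) * cnj (chi q (x*y'))) *
                  (\<Sum>xs\<in>vecs q m. chi q (dot xs ys) * cnj (chi q (dot xs ys')))"
    by (rule sum_product[symmetric])
  also have "\<dots> = (if y = y' then of_nat q else 0) * (if ys = ys' then of_nat (q^m) else 0)"
    using chi_single[OF q y y'] Suc.IH[OF ys ys'] by simp
  also have "\<dots> = (if t = t' then of_nat (q^Suc m) else 0)"
    by (simp add: t t')
  finally show ?case .
qed

lemma rect_bound:
  assumes q: "q > 0" and S: "S \<subseteq> vecs q m" and T: "T \<subseteq> vecs q m"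
    and orthST: "\<And>s t. s \<in> S \<Longrightarrow> t \<in> T \<Longrightarrow> dot s t mod q = C"
  shows "card S * card T \<le> q ^ m"
proof -
  define F where "F s = (\<Sum>t\<in>T. chi q (dot s t))" for s
  have finT: "finite T" using finite_subset[OF T finite_vecs] .
  have finS: "finite S" using finite_subset[OF S finite_vecs] .
  have pars: "(\<Sum>s\<in>vecs q m. F s * cnj (F s)) = of_nat (card T * q^m)"
  proof -
    have "(\<Sum>s\<in>vecs q m. F s * cnj (F s))
        = (\<Sum>s\<in>vecs q m. \<Sum>t\<in>T. \<Sum>t'\<in>T. chi q (dot s t) * cnj (chi q (dot s t')))"
      unfolding F_def cnj_sum sum_product ..
    also have "\<dots> = (\<Sum>t\<in>T. \<Sum>s\<in>vecs q m. \<Sum>t'\<in>T. chi q (dot s t) * cnj (chi q (dot s t')))"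
      by (rule sum.swap)
    also have "\<dots> = (\<Sum>t\<in>T. \<Sum>t'\<in>T. \<Sum>s\<in>vecs q m. chi q (dot s t) * cnj (chi q (dot s t')))"
      by (intro sum.cong refl sum.swap)
    also have "\<dots> = (\<Sum>t\<in>T. \<Sum>t'\<in>T. if t = t' then of_nat (q^m) else 0)"
      using T by (intro sum.cong refl) (simp add: orth[OF q] subsetD)
    also have "\<dots> = of_nat (card T * q^m)"
      using finT by simp
    finally show ?thesis .
  qed
  have Fs: "cmod (F s) = real (card T)" if "s \<in> S" for s
  proof -
    have "F s = (\<Sum>t\<in>T. chi q C)"
      unfolding F_def using that orthST by (intro sum.cong refl) (metis chi_mod[OF q])
    also have "\<dots> = of_nat (card T) * chi q C" by simp
    finally show ?thesis by (simp add: norm_mult)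
  qed
  have "(\<Sum>s\<in>vecs q m. (cmod (F s))^2) = real (card T * q^m)"
  proof -
    have "complex_of_real (\<Sum>s\<in>vecs q m. (cmod (F s))^2) = of_nat (card T * q^m)"
      by (simp only: of_real_sum complex_norm_square pars)
    then show ?thesis by (metis of_real_eq_iff of_real_of_nat_eq)
  qed
  moreover have "(\<Sum>s\<in>S. (cmod (F s))^2) \<le> (\<Sum>s\<in>vecs q m. (cmod (F s))^2)"
    using S by (intro sum_mono2) auto
  moreover have "(\<Sum>s\<in>S. (cmod (F s))^2) = real (card S * card T ^ 2)"
    using Fs by simp
  ultimately have "real (card S * card T ^ 2) \<le> real (card T * q^m)" by linarith
  then have le: "card S * card T * card T \<le> q^m * card T"
    by (simp only: of_nat_le_iff power2_eq_square mult_ac)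
  show ?thesis
  proof (cases "card T = 0")
    case True then show ?thesis by simp
  next
    case False then show ?thesis using le by simp
  qed
qed



definition countAnd :: "bool list \<Rightarrow> bool list \<Rightarrow> nat" where
  "countAnd u v = sum_list (map2 (\<lambda>a b. if a \<and> b then 1 else 0) u v)"
definition countNot :: "bool list \<Rightarrow> bool list \<Rightarrow> nat" where
  "countNot u v = sum_list (map2 (\<lambda>a b. if a \<and> b then 0 else 1) u v)"

lemma countAnd_Cons [simp]: "countAnd (a#u) (b#v) = (if a \<and> b then 1 else 0) + countAnd u v"
  by (simp add: countAnd_def)
lemma countNot_Cons [simp]: "countNot (a#u) (b#v) = (if a \<and> b then 0 else 1) + countNot u v"
  by (simp add: countNot_def)
lemma countAnd_Nil [simp]: "countAnd [] v = 0" by (simp add: countAnd_def)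
lemma countNot_Nil [simp]: "countNot [] v = 0" by (simp add: countNot_def)

lemma count_sum: "length u = length v \<Longrightarrow> countNot u v + countAnd u v = length u"
proof (induction u arbitrary: v)
  case Nil then show ?case by simp
next
  case (Cons a u) then obtain b v' where "v = b#v'" by (cases v) auto
  with Cons show ?case by auto
qed

lemma countAnd_append:
  "length x = length y \<Longrightarrow> countAnd (x @ u) (y @ v) = countAnd x y + countAnd u v"
  by (simp add: countAnd_def zip_append)

lemma countAnd_concat:
  "list_all2 (\<lambda>x y. length x = length y) U V \<Longrightarrow>
   countAnd (concat U) (concat V) = sum_list (map2 countAnd U V)"
  by (induction rule: list_all2_induct) (simp_all add: countAnd_append)

lemma countAnd_replicate:
  "length w = n \<Longrightarrow> countAnd (replicate n p) w = (if p then sum_list (map (\<lambda>b. if b then 1 else 0) w) else 0)"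
  by (induction w arbitrary: n) auto

definition blockA :: "nat \<Rightarrow> nat \<Rightarrow> bool list" where
  "blockA q x = concat (map (\<lambda>r. replicate q (r < x)) [0..<q])"
definition blockB :: "nat \<Rightarrow> nat \<Rightarrow> bool list" where
  "blockB q y = concat (replicate q (map (\<lambda>c. c < y) [0..<q]))"

lemma length_blockA [simp]: "length (blockA q x) = q * q"
  by (simp add: blockA_def length_concat o_def sum_list_triv)
lemma length_blockB [simp]: "length (blockB q y) = q * q"
  by (simp add: blockB_def length_concat sum_list_replicate)

lemma count_lt: "y \<le> q \<Longrightarrow> sum_list (map (\<lambda>c. if c < y then 1 else 0) [0..<q]) = (y::nat)"
proof -
  assume y: "y \<le> q"
  have "sum_list (map (\<lambda>c. if c < y then 1 else 0) [0..<q]) = (\<Sum>c\<in>{0..<q}. if c < y then 1 else (0::nat))"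
    by (simp add: sum_set_upt_conv_sum_list_nat[symmetric])
  also have "\<dots> = card ({0..<q} \<inter> {c. c < y})" by (simp add: sum.If_cases)
  also have "{0..<q} \<inter> {c. c < y} = {0..<y}" using y by auto
  finally show ?thesis by simp
qed

lemma countAnd_block:
  assumes "x \<le> q" "y \<le> q"
  shows "countAnd (blockA q x) (blockB q y) = x * y"
proof -
  have "countAnd (blockA q x) (blockB q y) =
     sum_list (map2 countAnd (map (\<lambda>r. replicate q (r < x)) [0..<q]) (replicate q (map (\<lambda>c. c < y) [0..<q])))"
    unfolding blockA_def blockB_def
    by (rule countAnd_concat) (simp add: list_all2_conv_all_nth)
  also have "\<dots> = sum_list (map (\<lambda>r. if r < x then y else 0) [0..<q])"
  proof -
    have "map2 countAnd (map (\<lambda>r. replicate q (r < x)) [0..<q]) (replicate q (map (\<lambda>c. c < y) [0..<q]))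
        = map (\<lambda>r. if r < x then y else 0) [0..<q]"
      by (rule nth_equalityI) (simp_all add: countAnd_replicate count_lt assms o_def)
    then show ?thesis by simp
  qed
  also have "\<dots> = (\<Sum>r\<in>{0..<q}. if r < x then y else 0)"
    by (simp add: sum_set_upt_conv_sum_list_nat[symmetric])
  also have "\<dots> = card ({0..<q} \<inter> {r. r < x}) * y" by (simp add: sum.If_cases)
  also have "{0..<q} \<inter> {r. r < x} = {0..<x}" using assms by auto
  finally show ?thesis by simp
qed

definition encA :: "nat \<Rightarrow> nat \<Rightarrow> nat list \<Rightarrow> bool list" where
  "encA q n a = concat (map (blockA q) a @ [replicate (n - length a * (q*q)) True])"
definition encB :: "nat \<Rightarrow> nat \<Rightarrow> nat list \<Rightarrow> bool list" where
  "encB q n b = concat (map (blockB q) b @ [replicate (n - length b * (q*q)) False])"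

lemma length_encA: "length a * (q*q) \<le> n \<Longrightarrow> length (encA q n a) = n"
  by (simp add: encA_def length_concat o_def sum_list_triv)
lemma length_encB: "length b * (q*q) \<le> n \<Longrightarrow> length (encB q n b) = n"
  by (simp add: encB_def length_concat o_def sum_list_triv)

lemma countAnd_enc:
  assumes a: "a \<in> vecs q m" and b: "b \<in> vecs q m"
  shows "countAnd (encA q n a) (encB q n b) = dot a b"
proof -
  have la: "length a = m" and lb: "length b = m" using a b by (auto simp: vecs_def)
  have "countAnd (encA q n a) (encB q n b) =
     sum_list (map2 countAnd (map (blockA q) a @ [replicate (n - length a * (q*q)) True])
                             (map (blockB q) b @ [replicate (n - length b * (q*q)) False]))"
    unfolding encA_def encB_def
    by (rule countAnd_concat) (simp add: list_all2_conv_all_nth nth_append la lb)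
  also have "\<dots> = sum_list (map2 countAnd (map (blockA q) a) (map (blockB q) b))"
    using la lb by (simp add: zip_append countAnd_replicate)
  also have "map2 countAnd (map (blockA q) a) (map (blockB q) b) = map2 (*) a b"
  proof (rule nth_equalityI)
    show "length (map2 countAnd (map (blockA q) a) (map (blockB q) b)) = length (map2 (*) a b)" by simp
    fix i assume "i < length (map2 countAnd (map (blockA q) a) (map (blockB q) b))"
    then have i: "i < m" using la lb by simp
    have "a ! i \<in> set a" "b ! i \<in> set b" using i la lb by simp_all
    then have "a ! i < q" "b ! i < q" using a b by (auto simp: vecs_def)
    then show "map2 countAnd (map (blockA q) a) (map (blockB q) b) ! i = map2 (*) a b ! i"
      using i la lb by (simp add: countAnd_block)
  qed
  finally show ?thesis by (simp add: dot_def)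
qed



definition LA :: "'a::monoid_mult \<Rightarrow> 'a \<Rightarrow> bool \<Rightarrow> 'a" where
  "LA e f u = (if u then e else e * f)"
definition LB :: "'a::monoid_mult \<Rightarrow> 'a \<Rightarrow> bool \<Rightarrow> 'a" where
  "LB e f v = (if v then e else f * e)"

lemma slot:
  fixes e f :: "'a::monoid_mult"
  assumes "e * e = e" "f * f = f"
  shows "LA e f u * LB e f v = (e*f) ^ (if u \<and> v then 0 else 1) * e"
proof -
  have "e * f * (f * e) = e * (f * f) * e" by (simp add: mult.assoc)
  then show ?thesis using assms by (auto simp: LA_def LB_def mult.assoc)
qed

lemma absorb:
  fixes e f :: "'a::monoid_mult"
  assumes "e * e = e"
  shows "e * ((e*f)^k * e) = (e*f)^k * e"
proof (cases k)
  case 0 then show ?thesis using assms by simp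
next
  case (Suc j)
  have "e * ((e*f)^k * e) = (e * (e * f)) * ((e*f)^j * e)" by (simp add: Suc mult.assoc)
  also have "e * (e * f) = e * f" using assms by (simp add: mult.assoc[symmetric])
  finally show ?thesis by (simp add: Suc mult.assoc)
qed

lemma prod_slots:
  fixes e f :: "'a::monoid_mult"
  assumes ee: "e * e = e" and ff: "f * f = f"
  shows "length u = length v \<Longrightarrow> u \<noteq> [] \<Longrightarrow>
    prod_list (map2 (*) (map (LA e f) u) (map (LB e f) v)) = (e*f) ^ countNot u v * e"
proof (induction u arbitrary: v)
  case Nil then show ?case by simp
next
  case (Cons a u)
  then obtain b v' where v: "v = b#v'" and len: "length u = length v'" by (cases v) auto
  show ?case
  proof (cases "u = []")
    case True
    then have "v' = []" using len by simp
    then show ?thesis using True v slot[OF ee ff, of a b] by simp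
  next
    case False
    have IH: "prod_list (map2 (*) (map (LA e f) u) (map (LB e f) v')) = (e*f) ^ countNot u v' * e"
      using Cons.IH[OF len False] .
    have "prod_list (map2 (*) (map (LA e f) (a#u)) (map (LB e f) v))
        = (LA e f a * LB e f b) * ((e*f) ^ countNot u v' * e)" using v IH by simp
    also have "\<dots> = (e*f) ^ (if a \<and> b then 0 else 1) * (e * ((e*f) ^ countNot u v' * e))"
      by (simp add: slot[OF ee ff] mult.assoc)
    also have "\<dots> = (e*f) ^ (if a \<and> b then 0 else 1) * ((e*f) ^ countNot u v' * e)"
      by (simp add: absorb[OF ee])
    also have "\<dots> = (e*f) ^ countNot (a#u) v * e"
      by (simp add: v power_add mult.assoc)
    finally show ?thesis .
  qed
qed

lemma pow_q_mult:
  fixes g e :: "'a::monoid_mult"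
  assumes "g ^ q * e = e"
  shows "g ^ (q * t) * e = e"
proof (induction t)
  case 0 then show ?case by simp
next
  case (Suc t)
  have "g ^ (q * Suc t) * e = g ^ q * (g ^ (q * t) * e)" by (simp add: power_add mult.assoc)
  then show ?case using Suc assms by simp
qed

lemma membership:
  fixes le :: "'a::monoid_mult \<Rightarrow> 'a \<Rightarrow> bool" and e f :: 'a
  assumes om: "ordered_monoid le" and ee: "e * e = e"
    and gq: "(e*f) ^ q * e = e"
    and gr: "\<forall>r::nat. 0 < r \<longrightarrow> \<not> q dvd r \<longrightarrow> (e*f) ^ r * e \<noteq> e"
    and q: "q > 0"
  shows "le ((e*f)^k * e) e \<longleftrightarrow> q dvd k"
proof
  assume "q dvd k"
  then obtain t where "k = q * t" by blast
  then have "(e*f)^k * e = e" using pow_q_mult[OF gq] by simp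
  then show "le ((e*f)^k * e) e" using om unfolding ordered_monoid_def by simp
next
  assume le1: "le ((e*f)^k * e) e"
  define g where "g = e * f"
  define z where "z j = g ^ (j * k) * e" for j
  have refl: "\<And>x. le x x" and antis: "\<And>x y. le x y \<Longrightarrow> le y x \<Longrightarrow> x = y"
    and trans: "\<And>x y z. le x y \<Longrightarrow> le y z \<Longrightarrow> le x z"
    and mono: "\<And>x y w. le x y \<Longrightarrow> le (w * x) (w * y)"
    using om unfolding ordered_monoid_def by blast+
  have z0: "z 0 = e" by (simp add: z_def)
  have z1: "le (z 1) (z 0)" using le1 by (simp add: z_def g_def)
  have step: "le (z (Suc j)) (z j)" for j
  proof (induction j)
    case 0 then show ?case using z1 by simp
  next
    case (Suc j)
    have "le (g ^ k * z (Suc j)) (g ^ k * z j)" using mono[OF Suc] .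
    moreover have "g ^ k * z j = z (Suc j)" for j
      by (simp add: z_def power_add mult.assoc[symmetric] add.commute)
    ultimately show ?case by metis
  qed
  have chain: "le (z (Suc j)) (z 1)" for j
  proof (induction j)
    case 0 then show ?case by (simp add: refl)
  next
    case (Suc j) then show ?case using step[of "Suc j"] trans by blast
  qed
  have "z q = e" unfolding z_def g_def using pow_q_mult[OF gq, of k] by (simp add: mult.commute)
  moreover obtain q' where "q = Suc q'" using q by (cases q) auto
  ultimately have "le e (z 1)" using chain[of q'] by simp
  then have ze: "z 1 = e" using z1 z0 antis by simp
  show "q dvd k"
  proof (rule ccontr)
    assume nd: "\<not> q dvd k"
    define r where "r = k mod q"
    have r0: "0 < r" using nd by (simp add: r_def mod_eq_0_iff_dvd[symmetric])
    have rnd: "\<not> q dvd r" using nd by (simp add: r_def dvd_mod_iff q)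
    have kk: "(e*f)^k = g ^ r * g ^ (q * (k div q))"
      unfolding g_def r_def power_add[symmetric] by (simp only: mod_mult_div_eq)
    have "(e*f)^k * e = g ^ r * (g ^ (q * (k div q)) * e)"
      by (simp add: kk mult.assoc)
    also have "\<dots> = (e*f) ^ r * e" using pow_q_mult[OF gq] by (simp add: g_def)
    finally have "(e*f) ^ r * e = e" using ze by (simp add: z_def g_def)
    then show False using gr r0 rnd by blast
  qed
qed



lemma cover_exists:
  assumes "finite X" "finite Y"
  shows "\<exists>k R. finite R \<and> card R = k \<and>
      (\<forall>(S, T) \<in> R. S \<subseteq> X \<and> T \<subseteq> Y \<and> (\<forall>x\<in>S. \<forall>y\<in>T. f x y)) \<and>
      (\<Union>(S, T) \<in> R. S \<times> T) = {(x, y). x \<in> X \<and> y \<in> Y \<and> f x y}"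
proof -
  define R where "R = (\<lambda>(x,y). ({x},{y})) ` {(x, y). x \<in> X \<and> y \<in> Y \<and> f x y}"
  have "finite {(x, y). x \<in> X \<and> y \<in> Y \<and> f x y}"
    by (rule finite_subset[of _ "X \<times> Y"]) (use assms in auto)
  then have "finite R" unfolding R_def by simp
  moreover have "\<forall>(S, T) \<in> R. S \<subseteq> X \<and> T \<subseteq> Y \<and> (\<forall>x\<in>S. \<forall>y\<in>T. f x y)"
    unfolding R_def by auto
  moreover have "(\<Union>(S, T) \<in> R. S \<times> T) = {(x, y). x \<in> X \<and> y \<in> Y \<and> f x y}"
    unfolding R_def by auto
  ultimately show ?thesis by blast
qed

lemma cover_lower:
  fixes f :: "'x \<Rightarrow> 'y \<Rightarrow> bool" and \<alpha> :: "nat list \<Rightarrow> 'x" and \<beta> :: "nat list \<Rightarrow> 'y"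
  assumes X: "finite X" and Y: "finite Y" and q: "q > 0"
    and \<alpha>: "\<alpha> ` vecs q m \<subseteq> X" and \<beta>: "\<beta> ` vecs q m \<subseteq> Y"
    and rel: "\<And>a b. a \<in> vecs q m \<Longrightarrow> b \<in> vecs q m \<Longrightarrow> f (\<alpha> a) (\<beta> b) \<longleftrightarrow> dot a b mod q = C"
  shows "card {(a,b). a \<in> vecs q m \<and> b \<in> vecs q m \<and> dot a b mod q = C} \<le> cover_number f X Y * q^m"
proof -
  define P where "P = {(a,b). a \<in> vecs q m \<and> b \<in> vecs q m \<and> dot a b mod q = C}"
  define E where "E k = (\<exists>R. finite R \<and> card R = k \<and>
      (\<forall>(S, T) \<in> R. S \<subseteq> X \<and> T \<subseteq> Y \<and> (\<forall>x\<in>S. \<forall>y\<in>T. f x y)) \<and>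
      (\<Union>(S, T) \<in> R. S \<times> T) = {(x, y). x \<in> X \<and> y \<in> Y \<and> f x y})" for k
  have "\<exists>k. E k" using cover_exists[OF X Y, of f] unfolding E_def by blast
  then have "E (LEAST k. E k)" by (rule LeastI_ex)
  moreover have "cover_number f X Y = (LEAST k. E k)" unfolding cover_number_def E_def ..
  ultimately obtain R where finR: "finite R" and cR: "card R = cover_number f X Y"
    and rect: "\<forall>(S, T) \<in> R. S \<subseteq> X \<and> T \<subseteq> Y \<and> (\<forall>x\<in>S. \<forall>y\<in>T. f x y)"
    and cov: "(\<Union>(S, T) \<in> R. S \<times> T) = {(x, y). x \<in> X \<and> y \<in> Y \<and> f x y}"
    unfolding E_def by auto
  define G where "G \<rho> = {a \<in> vecs q m. \<alpha> a \<in> fst \<rho>} \<times> {b \<in> vecs q m. \<beta> b \<in> snd \<rho>}" for \<rho>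
  have sub: "P \<subseteq> (\<Union>\<rho>\<in>R. G \<rho>)"
  proof
    fix p assume "p \<in> P"
    then obtain a b where p: "p = (a,b)" and a: "a \<in> vecs q m" and b: "b \<in> vecs q m"
      and d: "dot a b mod q = C" unfolding P_def by auto
    have "(\<alpha> a, \<beta> b) \<in> {(x, y). x \<in> X \<and> y \<in> Y \<and> f x y}"
      using a b \<alpha> \<beta> rel[OF a b] d by auto
    then obtain S T where "(S,T) \<in> R" "\<alpha> a \<in> S" "\<beta> b \<in> T" using cov by blast
    then show "p \<in> (\<Union>\<rho>\<in>R. G \<rho>)" using a b p unfolding G_def by force
  qed
  have Gb: "card (G \<rho>) \<le> q^m" if "\<rho> \<in> R" for \<rho>
  proof -
    obtain S T where \<rho>: "\<rho> = (S,T)" by (cases \<rho>)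
    have mono: "\<forall>x\<in>S. \<forall>y\<in>T. f x y" using rect that \<rho> by auto
    have "card {a \<in> vecs q m. \<alpha> a \<in> S} * card {b \<in> vecs q m. \<beta> b \<in> T} \<le> q^m"
    proof (rule rect_bound[OF q])
      fix s t assume "s \<in> {a \<in> vecs q m. \<alpha> a \<in> S}" "t \<in> {b \<in> vecs q m. \<beta> b \<in> T}"
      then show "dot s t mod q = C" using mono rel by auto
    qed auto
    then show ?thesis unfolding G_def \<rho> by (simp add: card_cartesian_product)
  qed
  have finG: "finite (G \<rho>)" for \<rho> unfolding G_def by simp
  have "card P \<le> card (\<Union>\<rho>\<in>R. G \<rho>)"
    by (rule card_mono) (use finR finG sub in auto)
  also have "\<dots> \<le> (\<Sum>\<rho>\<in>R. card (G \<rho>))" by (rule card_UN_le[OF finR])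
  also have "\<dots> \<le> (\<Sum>\<rho>\<in>R. q^m)" by (rule sum_mono) (rule Gb)
  also have "\<dots> = cover_number f X Y * q^m" using cR by simp
  finally show ?thesis unfolding P_def .
qed

lemma count_P:
  assumes q: "q > 1" and C: "C < q"
  shows "q ^ (2*m) \<le> card {(a,b). a \<in> vecs q (Suc m) \<and> b \<in> vecs q (Suc m) \<and> dot a b mod q = C}"
proof -
  define P where "P = {(a,b). a \<in> vecs q (Suc m) \<and> b \<in> vecs q (Suc m) \<and> dot a b mod q = C}"
  define c where "c xs ys = (C + q - dot xs ys mod q) mod q" for xs ys
  define h where "h p = (1 # fst p, c (fst p) (snd p) # snd p)" for p
  have finP: "finite P"
    by (rule finite_subset[of _ "vecs q (Suc m) \<times> vecs q (Suc m)"]) (auto simp: P_def)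
  have hin: "h p \<in> P" if "p \<in> vecs q m \<times> vecs q m" for p
  proof -
    obtain xs ys where p: "p = (xs, ys)" by (cases p)
    have xs: "xs \<in> vecs q m" and ys: "ys \<in> vecs q m" using that p by auto
    define d where "d = dot xs ys"
    have dm: "d mod q < q" using q by simp
    have "(c xs ys + d) mod q = ((C + q - d mod q) + d) mod q"
      unfolding c_def d_def by (simp add: mod_add_left_eq)
    also have "(C + q - d mod q) + d = C + q * (1 + d div q)"
      using dm mod_mult_div_eq[of d q] distrib_left[of q 1 "d div q"] by linarith
    also have "(C + q * (1 + d div q)) mod q = C" using C by (simp only: mod_mult_self2) simp
    finally have "dot (1 # xs) (c xs ys # ys) mod q = C" by (simp add: d_def add.commute)
    moreover have "1 # xs \<in> vecs q (Suc m)" "c xs ys # ys \<in> vecs q (Suc m)"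
      using xs ys q by (auto simp: vecs_def c_def)
    ultimately show ?thesis unfolding P_def h_def p by simp
  qed
  have "inj_on h (vecs q m \<times> vecs q m)"
    unfolding h_def by (auto simp: inj_on_def)
  then have "card (vecs q m \<times> vecs q m) \<le> card P"
    using card_inj_on_le[of h _ P] hin finP by blast
  then show ?thesis unfolding P_def by (simp add: card_cartesian_product card_vecs power_add mult_2)
qed



lemma finite_len: "finite {xs :: 'a::finite list. length xs = n}"
  using finite_lists_length_eq[of "UNIV :: 'a set" n] by simp

theorem mainTheorem13:
  fixes le :: "'a::{monoid_mult,finite} \<Rightarrow> 'a \<Rightarrow> bool" and q :: nat
  assumes "q > 1" and "ordered_monoid le" and "Tq_monoid q TYPE('a)"
  shows "(\<lambda>n. N1_monoid le n) \<in> \<Omega>(\<lambda>n. real n)"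
proof -
  have q1: "q > 1" and om: "ordered_monoid le" using assms by auto
  have q0: "q > 0" using q1 by simp
  from assms(3) obtain e f :: 'a where ee: "e * e = e" and ff: "f * f = f"
    and gq: "(e * f) ^ q * e = e"
    and gr: "\<forall>r::nat. 0 < r \<longrightarrow> \<not> q dvd r \<longrightarrow> (e * f) ^ r * e \<noteq> e"
    unfolding Tq_monoid_def by blast
  define I where "I = {x. le x e}"
  have oi: "order_ideal le I"
    using om unfolding order_ideal_def I_def ordered_monoid_def by blast
  define Q where "Q = q * q"
  have Q0: "Q > 0" using q0 by (simp add: Q_def)
  have key: "real (n div Q) - 2 \<le> N1_monoid le n" if n: "2 * Q \<le> n" for n
  proof -
    define m where "m = n div Q"
    have m2: "m \<ge> 2" using n Q0 unfolding m_def
      by (metis div_le_mono nonzero_mult_div_cancel_right not_gr0)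
    then obtain m' where mm: "m = Suc m'" and m'1: "m' \<ge> 1" by (cases m) auto
    have mQ: "m * Q \<le> n" unfolding m_def by (simp add: div_times_less_eq_dividend)
    have n1: "n \<noteq> 0" using n Q0 by auto
    define X where "X = {xs :: 'a list. length xs = n}"
    define \<alpha> where "\<alpha> a = map (LA e f) (encA q n a)" for a
    define \<beta> where "\<beta> b = map (LB e f) (encB q n b)" for b
    have lenab: "length a = m" if "a \<in> vecs q m" for a using that by (simp add: vecs_def)
    have lenA: "length (encA q n a) = n" if "a \<in> vecs q m" for a
      using length_encA[of a q n] lenab[OF that] mQ by (simp add: Q_def)
    have lenB: "length (encB q n b) = n" if "b \<in> vecs q m" for b
      using length_encB[of b q n] lenab[OF that] mQ by (simp add: Q_def)
    have rel: "word_problem I (\<alpha> a) (\<beta> b) \<longleftrightarrow> dot a b mod q = n mod q"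
      if a: "a \<in> vecs q m" and b: "b \<in> vecs q m" for a b
    proof -
      let ?u = "encA q n a" and ?v = "encB q n b"
      have luv: "length ?u = length ?v" "?u \<noteq> []" using lenA[OF a] lenB[OF b] n1 by auto
      have "word_problem I (\<alpha> a) (\<beta> b) \<longleftrightarrow> le ((e*f) ^ countNot ?u ?v * e) e"
        unfolding word_problem_def \<alpha>_def \<beta>_def I_def using prod_slots[OF ee ff luv] by simp
      also have "\<dots> \<longleftrightarrow> q dvd countNot ?u ?v" by (rule membership[OF om ee gq gr q0])
      also have "countNot ?u ?v = n - dot a b"
        using count_sum[OF luv(1)] countAnd_enc[OF a b] lenA[OF a] by simp
      also have "q dvd n - dot a b \<longleftrightarrow> n mod q = dot a b mod q"
        using count_sum[OF luv(1)] countAnd_enc[OF a b] lenA[OF a]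
        by (intro mod_eq_dvd_iff_nat[symmetric]) simp
      finally show ?thesis by (simp add: eq_commute)
    qed
    have cl: "card {(a,b). a \<in> vecs q m \<and> b \<in> vecs q m \<and> dot a b mod q = n mod q}
        \<le> cover_number (word_problem I) X X * q^m"
    proof (rule cover_lower[OF _ _ q0])
      show "finite X" "finite X" unfolding X_def by (rule finite_len)+
      show "\<alpha> ` vecs q m \<subseteq> X" using lenA unfolding X_def \<alpha>_def by auto
      show "\<beta> ` vecs q m \<subseteq> X" using lenB unfolding X_def \<beta>_def by auto
    qed (rule rel)
    have "q ^ (2*m') \<le> card {(a,b). a \<in> vecs q m \<and> b \<in> vecs q m \<and> dot a b mod q = n mod q}"
      unfolding mm by (rule count_P[OF q1]) (simp add: q0)
    moreover have "q ^ (2*m') = q ^ (m' - 1) * q ^ m"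
    proof -
      have "2*m' = (m' - 1) + m" using m'1 mm by simp
      then show ?thesis by (simp add: power_add)
    qed
    ultimately have "q ^ (m' - 1) * q ^ m \<le> cover_number (word_problem I) X X * q^m"
      using cl by linarith
    then have cov: "q ^ (m - 2) \<le> cover_number (word_problem I) X X"
      using q0 mm by simp
    have "real (m - 2) \<le> real (m - 2) * log 2 (real q)"
    proof -
      have "log 2 (real q) \<ge> 1" using q1 by simp
      then show ?thesis by (simp add: mult_le_cancel_left1)
    qed
    also have "\<dots> = log 2 (real (q ^ (m - 2)))" using q0 by (simp add: log_nat_power)
    also have "\<dots> \<le> log 2 (real (cover_number (word_problem I) X X))"
    proof -
      have c: "real (q^(m-2)) \<le> real (cover_number (word_problem I) X X)" using cov by (simp only: of_nat_le_iff)
      have p: "0 < real (q^(m-2))" using q0 by simp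
      have p2: "0 < real (cover_number (word_problem I) X X)" using c p by linarith
      show ?thesis using c p p2 by (subst log_le_cancel_iff) auto
    qed
    also have "\<dots> = N1_ideal I n" unfolding N1_ideal_def N1_def X_def ..
    also have "\<dots> \<le> N1_monoid le n"
    proof -
      have fin: "finite {N1_ideal I n | I. order_ideal le I}"
      proof -
        have "{N1_ideal I n | I. order_ideal le I} \<subseteq> (\<lambda>I. N1_ideal I n) ` (UNIV :: 'a set set)" by auto
        then show ?thesis by (rule finite_subset) simp
      qed
      show ?thesis unfolding N1_monoid_def by (rule Max_ge[OF fin]) (use oi in blast)
    qed
    finally show ?thesis using m2 unfolding m_def by simp
  qed
  show ?thesis
  proof (rule landau_omega.bigI[of "1 / (2 * real Q)"])
    show "0 < 1 / (2 * real Q)" using Q0 by simp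
    show "\<forall>\<^sub>F x in at_top. 1 / (2 * real Q) * norm (real x) \<le> norm (N1_monoid le x)"
      unfolding eventually_at_top_linorder
    proof (intro exI allI impI)
      fix n :: nat assume n: "n \<ge> 6 * Q"
      have "n < (n div Q + 1) * Q"
      proof -
        have "(n div Q + 1) * Q = Q * (n div Q) + Q" by (simp add: algebra_simps)
        then show ?thesis using mod_less_divisor[OF Q0, of n] mod_mult_div_eq[of n Q] by linarith
      qed
      then have "real n < (real (n div Q) + 1) * real Q" by (metis of_nat_1 of_nat_add of_nat_less_iff of_nat_mult)
      then have lo: "real n / real Q - 1 < real (n div Q)" using Q0 by (simp add: field_simps)
      have "real (n div Q) - 2 \<le> N1_monoid le n" using key n by simp
      moreover have "1 / (2 * real Q) * real n \<le> real n / real Q - 3"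
      proof -
        have "6 * real Q \<le> real n" using n by (metis of_nat_le_iff of_nat_mult of_nat_numeral)
        then show ?thesis using Q0 by (simp add: field_simps)
      qed
      ultimately show "1 / (2 * real Q) * norm (real n) \<le> norm (N1_monoid le n)" using lo by simp
    qed
  qed
qed

end
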